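(* Let $(\mathcal S,\gamma)$ be a normalized IFS path in $\mathbb{R}^2$, $\mathcal S=\{S_1,\dots,S_N\}$, such that (1) $S_1$ and $S_N$ are orientation preserving; (2) there exist $t,s\in\mathbb{N}$ with $r_1^t=r_N^s$ and $t\alpha_1-s\alpha_N\in 2\pi(\mathbb{R}\setminus\mathbb{Q})$; (3) there exists $i\in\{1,\dots,N-1\}$ such that (a) $S_i$ and $S_{i+1}$ are either both orientation preserving or both orientation reversing, and (b) there is no rotation around the point $S_i(\mathbf e_1)=S_{i+1}(0)$ that maps $S_i(\gamma)$ into $S_{i+1}(\gamma)$, and no such rotation mapping $S_{i+1}(\gamma)$ into $S_i(\gamma)$. Then $(\mathcal S,\gamma)$ is not an IFS arc.
   Context: Let $\mathcal S=\{S_1,\dots,S_N\}$, $N\ge2$, be contracting similarities of $\mathbb{R}^2$, $S_j(x)=r_jA_j(x)+b_j$ with $r_j\in(0,1)$, $A_j$ orthogonal. Write $A_j=R_{\alpha_j}\circ I_j$ where $R_{\alpha_j}$ is counterclockwise rotation by $\alpha_j\in[0,2\pi)$ and $I_j$ is the identity or reflection in the $x$-axis; for orientation-preserving $S_j$, $A_j=R_{\alpha_j}$. The invariant set $\gamma$ is the unique nonempty compact set with $\gamma=\bigcup_jS_j(\gamma)$. $(\mathcal S,\gamma)$ is a normalized IFS path if $S_1(0)=0$, $S_N(\mathbf e_1)=\mathbf e_1$ with $\mathbf e_1=(1,0)$, and $S_j(\mathbf e_1)=S_{j+1}(0)$ for $j=1,\dots,N-1$. It is an IFS arc if moreover $S_j(\gamma)\cap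 S_{j+1}(\gamma)=\{S_{j+1}(0)\}$ for $j=1,\dots,N-1$ and $S_j(\gamma)\cap S_k(\gamma)=\emptyset$ for $j,k\in\{1,\dots,N\}$, $|j-k|>1$. *)

theory Defs
  imports "HOL-Analysis.Analysis"
begin

text \<open>The plane R^2 is identified with the complex numbers; e1 = (1,0) is 1.
A contracting similarity S(x) = r A x + b with A = R_alpha o I, where I is the identity
or the reflection in the x-axis (complex conjugation).\<close>

definition simil :: "real \<Rightarrow> real \<Rightarrow> bool \<Rightarrow> complex \<Rightarrow> complex \<Rightarrow> complex" where
  "simil r a rf b z = complex_of_real r * cis a * (if rf then cnj z else z) + b"

definition rot_around :: "complex \<Rightarrow> real \<Rightarrow> complex \<Rightarrow> complex" where
  "rot_around p theta z = p + cis theta * (z - p)"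

definition IFS_data :: "nat \<Rightarrow> (nat \<Rightarrow> real) \<Rightarrow> (nat \<Rightarrow> real) \<Rightarrow> (nat \<Rightarrow> bool) \<Rightarrow> (nat \<Rightarrow> complex) \<Rightarrow> bool" where
  "IFS_data N r \<alpha> rf b \<longleftrightarrow> N \<ge> 2 \<and>
     (\<forall>j\<in>{1..N}. 0 < r j \<and> r j < 1 \<and> 0 \<le> \<alpha> j \<and> \<alpha> j < 2 * pi)"

definition is_attractor :: "nat \<Rightarrow> (nat \<Rightarrow> complex \<Rightarrow> complex) \<Rightarrow> complex set \<Rightarrow> bool" where
  "is_attractor N S \<gamma> \<longleftrightarrow> compact \<gamma> \<and> \<gamma> \<noteq> {} \<and> \<gamma> = (\<Union>j\<in>{1..N}. S j ` \<gamma>)"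

definition normalized_IFS_path :: "nat \<Rightarrow> (nat \<Rightarrow> complex \<Rightarrow> complex) \<Rightarrow> complex set \<Rightarrow> bool" where
  "normalized_IFS_path N S \<gamma> \<longleftrightarrow> is_attractor N S \<gamma> \<and>
     S 1 0 = 0 \<and> S N 1 = 1 \<and> (\<forall>j\<in>{1..N-1}. S j 1 = S (Suc j) 0)"

definition IFS_arc :: "nat \<Rightarrow> (nat \<Rightarrow> complex \<Rightarrow> complex) \<Rightarrow> complex set \<Rightarrow> bool" where
  "IFS_arc N S \<gamma> \<longleftrightarrow> normalized_IFS_path N S \<gamma> \<and>
     (\<forall>j\<in>{1..N-1}. S j ` \<gamma> \<inter> S (Suc j) ` \<gamma> = {S (Suc j) 0}) \<and>
     (\<forall>j\<in>{1..N}. \<forall>k\<in>{1..N}. (j > k + 1 \<or> k > j + 1) \<longrightarrow> S j ` \<gamma> \<inter> S k ` \<gamma> = {})"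

end

theory Submission
  imports Defs
begin
lemma extract_interval:
  fixes h :: "real \<Rightarrow> real"
  assumes cont: "continuous_on {0..1} h" and h0: "h 0 \<le> a" and ab: "a < b" and h1: "b \<le> h 1"
  shows "\<exists>u v. 0 \<le> u \<and> u \<le> v \<and> v \<le> 1 \<and> h u = a \<and> h v = b \<and>
            (\<forall>t\<in>{u..v}. a \<le> h t \<and> h t \<le> b)"
proof -
  define S where "S = {0..1} \<inter> h -` {b..}"
  have "closed S" unfolding S_def
    by (rule continuous_closed_preimage[OF cont]) auto
  moreover have "bounded S" unfolding S_def by (rule bounded_subset[of "{0..1}"]) auto
  ultimately have cS: "compact S" by (simp add: compact_eq_bounded_closed)
  have "1 \<in> S" using h1 by (auto simp: S_def)
  then obtain v where vS: "v \<in> S" and vmin: "\<And>t. t \<in> S \<Longrightarrow> v \<le> t"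
    using compact_attains_inf[OF cS] by blast
  have v01: "0 \<le> v" "v \<le> 1" "b \<le> h v" using vS by (auto simp: S_def)
  have "\<exists>x. 0 \<le> x \<and> x \<le> v \<and> h x = b"
    by (rule IVT') (use h0 ab v01 in \<open>auto intro: continuous_on_subset[OF cont]\<close>)
  then obtain x where x: "0 \<le> x" "x \<le> v" "h x = b" by blast
  have "x \<in> S" using x v01 by (auto simp: S_def)
  with vmin x have hvb: "h v = b" by (metis order_antisym)
  have below: "h t < b" if "0 \<le> t" "t < v" for t
  proof (rule ccontr)
    assume "\<not> h t < b"
    then have "t \<in> S" using that v01 by (auto simp: S_def)
    with vmin that show False by force
  qed
  define T where "T = {0..v} \<inter> h -` {..a}"
  have "closed T" unfolding T_def
    by (rule continuous_closed_preimage[OF continuous_on_subset[OF cont]]) (use v01 in auto)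
  moreover have "bounded T" unfolding T_def by (rule bounded_subset[of "{0..v}"]) auto
  ultimately have cT: "compact T" by (simp add: compact_eq_bounded_closed)
  have "0 \<in> T" using h0 v01 by (auto simp: T_def)
  then obtain u where uT: "u \<in> T" and umax: "\<And>t. t \<in> T \<Longrightarrow> t \<le> u"
    using compact_attains_sup[OF cT] by blast
  have u0: "0 \<le> u" "u \<le> v" "h u \<le> a" using uT by (auto simp: T_def)
  have "\<exists>y. u \<le> y \<and> y \<le> v \<and> h y = a"
    by (rule IVT') (use u0 hvb ab v01 in \<open>auto intro: continuous_on_subset[OF cont]\<close>)
  then obtain y where y: "u \<le> y" "y \<le> v" "h y = a" by blast
  have "y \<in> T" using y u0 by (auto simp: T_def)
  with umax y have hua: "h u = a" by (metis order_antisym)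
  have "\<forall>t\<in>{u..v}. a \<le> h t \<and> h t \<le> b"
  proof
    fix t assume t: "t \<in> {u..v}"
    have "h t \<le> b"
    proof (cases "t < v")
      case True then show ?thesis using below[of t] t u0 by auto
    next
      case False then show ?thesis using t hvb by auto
    qed
    moreover have "a \<le> h t"
    proof (rule ccontr)
      assume "\<not> a \<le> h t"
      then have "t \<in> T" using t u0 by (auto simp: T_def)
      then have "t \<le> u" by (rule umax)
      then have "t = u" using t by auto
      with \<open>\<not> a \<le> h t\<close> hua show False by auto
    qed
    ultimately show "a \<le> h t \<and> h t \<le> b" by auto
  qed
  then show ?thesis using u0 v01 hua hvb by blast
qed

definition toR2 :: "complex \<Rightarrow> real^2" where "toR2 z = vector [Re z, Im z]"

lemma toR2_nth[simp]: "toR2 z $ 1 = Re z" "toR2 z $ 2 = Im z"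
  by (simp_all add: toR2_def)

lemma linear_toR2: "linear toR2"
  by (rule linearI) (auto simp: vec_eq_iff forall_2)

lemma continuous_on_toR2[continuous_intros]: "continuous_on S f \<Longrightarrow> continuous_on S (\<lambda>x. toR2 (f x))"
  using continuous_on_compose2[OF linear_continuous_on[OF linear_linear[THEN iffD2, OF linear_toR2]]] by auto

lemma toR2_inj: "toR2 z = toR2 w \<Longrightarrow> z = w"
  by (metis complex_eqI toR2_nth)

lemma decomp_scale:
  fixes M \<tau> :: real
  assumes M: "1 < M" and t: "0 < \<tau>" "\<tau> \<le> 1"
  shows "\<exists>n::nat. 1/M < \<tau> * M^n \<and> \<tau> * M^n \<le> 1"
proof -
  obtain m where m: "1/\<tau> < M^m" using real_arch_pow[OF M] by blast
  then have ex: "1 < \<tau> * M^m" using t by (simp add: field_simps)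
  define n where "n = (LEAST m. 1 < \<tau> * M^m)"
  have n1: "1 < \<tau> * M^n" unfolding n_def by (rule LeastI[of _ m]) (rule ex)
  have "n \<noteq> 0"
  proof
    assume "n = 0" then show False using n1 t by simp
  qed
  then obtain k where k: "n = Suc k" by (cases n) auto
  have "\<not> 1 < \<tau> * M^k" using not_less_Least[of k "\<lambda>m. 1 < \<tau> * M^m"] k n_def by auto
  then have "\<tau> * M^k \<le> 1" by simp
  moreover have "1/M < \<tau> * M^k" using n1 k M by (simp add: field_simps)
  ultimately show ?thesis by blast
qed

lemma iterate_shift:
  fixes P :: "real \<Rightarrow> complex" and M :: real
  assumes M: "1 < M" and sh: "\<And>\<tau>. \<tau> \<in> {0<..1} \<Longrightarrow> P (\<tau>/M) = P \<tau> + c"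
  shows "\<tau> \<in> {0<..1} \<Longrightarrow> P (\<tau>/M^n) = P \<tau> + of_nat n * c"
proof (induction n)
  case 0 then show ?case by simp
next
  case (Suc n)
  have "\<tau>/M^n \<in> {0<..1}" using Suc.prems M
    by (metis (mono_tags, opaque_lifting) divide_le_eq_1_pos
    greaterThanAtMost_iff less_eq_real_def one_le_power order.strict_trans
    order.trans zero_less_divide_iff)
  then have "P (\<tau>/M^n/M) = P (\<tau>/M^n) + c" by (rule sh)
  moreover have "\<tau>/M^Suc n = \<tau>/M^n/M" by (simp add: field_simps)
  ultimately show ?case using Suc by (simp add: algebra_simps)
qed

lemma shift_bound:
  fixes P :: "real \<Rightarrow> complex" and M :: real
  assumes cont: "continuous_on {0<..1} P" and M: "1 < M"
    and sh: "\<And>\<tau>. \<tau> \<in> {0<..1} \<Longrightarrow> P (\<tau>/M) = P \<tau> + c"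
  obtains B where "\<And>\<tau>. \<tau> \<in> {0<..1} \<Longrightarrow> \<exists>n::nat. norm (P \<tau> - of_nat n * c) \<le> B \<and>
                     1/M^(n+1) < \<tau> \<and> \<tau> \<le> 1/M^n"
proof -
  have M0: "0 < 1/M" using M by simp
  have "compact (P ` {1/M..1})"
    by (rule compact_continuous_image[OF continuous_on_subset[OF cont]]) (use M M0 in \<open>auto intro: less_le_trans[OF M0]\<close>)
  then obtain B where B: "\<And>z. z \<in> P ` {1/M..1} \<Longrightarrow> norm z \<le> B"
    using compact_imp_bounded bounded_iff by metis
  show ?thesis
  proof (rule that)
    fix \<tau> :: real assume t: "\<tau> \<in> {0<..1}"
    obtain n :: nat where n: "1/M < \<tau> * M^n" "\<tau> * M^n \<le> 1"
      using decomp_scale[OF M] t by auto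
    define \<tau>0 where "\<tau>0 = \<tau> * M^n"
    have t0: "\<tau>0 \<in> {0<..1}" using n M by (auto simp: \<tau>0_def intro: less_trans[of 0 "1/M"])
    have "P (\<tau>0/M^n) = P \<tau>0 + of_nat n * c" by (rule iterate_shift[of M P c, OF M sh t0])
    moreover have "\<tau>0/M^n = \<tau>" using M by (simp add: \<tau>0_def)
    ultimately have "P \<tau> - of_nat n * c = P \<tau>0" by simp
    moreover have "norm (P \<tau>0) \<le> B" using B n M by (auto simp: \<tau>0_def less_imp_le)
    moreover have "1/M^(n+1) < \<tau>" "\<tau> \<le> 1/M^n" using n M by (auto simp: field_simps)
    ultimately show "\<exists>n::nat. norm (P \<tau> - of_nat n * c) \<le> B \<and> 1/M^(n+1) < \<tau> \<and> \<tau> \<le> 1/M^n"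
      by metis
  qed
qed

lemma convex_comb_bounds:
  fixes t c0 c1 :: real
  assumes "0 \<le> t" "t \<le> 1" "c1 \<le> c0"
  shows "c1 \<le> (1-t)*c0 + t*c1" "(1-t)*c0 + t*c1 \<le> c0"
proof -
  have "(1-t)*c0 + t*c1 - c1 = (1-t)*(c0-c1)" by (simp add: algebra_simps)
  moreover have "(1-t)*(c0-c1) \<ge> 0" using assms by simp
  ultimately show "c1 \<le> (1-t)*c0 + t*c1" by linarith
  have "c0 - ((1-t)*c0 + t*c1) = t*(c0-c1)" by (simp add: algebra_simps)
  moreover have "t*(c0-c1) \<ge> 0" using assms by simp
  ultimately show "(1-t)*c0 + t*c1 \<le> c0" by linarith
qed

lemma path_through:
  fixes P :: "real \<Rightarrow> complex"
  assumes cP: "continuous_on {0<..1} P" and c: "0 < c1" "c1 \<le> c0" "c0 \<le> 1"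
  shows "path (\<lambda>t. P ((1-t)*c0 + t*c1))"
    and "\<And>t. t \<in> {0..1} \<Longrightarrow> (1-t)*c0 + t*c1 \<in> {c1..c0}"
proof -
  show mem: "\<And>t. t \<in> {0..1} \<Longrightarrow> (1-t)*c0 + t*c1 \<in> {c1..c0}"
    using convex_comb_bounds c by auto
  have "continuous_on {0..1} (\<lambda>t. (1-t)*c0 + t*c1)" by (intro continuous_intros)
  moreover have "(\<lambda>t. (1-t)*c0 + t*c1) ` {0..1} \<subseteq> {0<..1}"
    using mem c by fastforce
  ultimately show "path (\<lambda>t. P ((1-t)*c0 + t*c1))"
    unfolding path_def by (rule continuous_on_compose2[OF cP])
qed

lemma subpath_point:
  fixes a b s :: real
  assumes "0 \<le> a" "a \<le> b" "b \<le> 1" "s \<in> {0..1}"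
  shows "(b-a) * s + a \<in> {a..b}"
proof -
  have "(b-a) * s \<le> (b-a)" using assms by (intro mult_left_le) auto
  moreover have "(b-a) * s \<ge> 0" using assms by auto
  ultimately show ?thesis by auto
qed

lemma crossing:
  fixes P Q :: "real \<Rightarrow> complex" and M M' \<beta> :: real
  assumes cP: "continuous_on {0<..1} P" and cQ: "continuous_on {0<..1} Q"
    and M: "1 < M" and M': "1 < M'" and \<beta>: "0 < \<beta>"
    and shP: "\<And>\<tau>. \<tau> \<in> {0<..1} \<Longrightarrow> P (\<tau>/M) = P \<tau> + 1"
    and shQ: "\<And>x. x \<in> {0<..1} \<Longrightarrow> Q (x/M') = Q x + Complex 1 \<beta>"
  shows "\<exists>\<tau>\<in>{0<..1}. \<exists>x\<in>{0<..1}. \<exists>k::int. P \<tau> + \<i> * of_int k = Q x"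
proof -
  obtain B where B: "\<And>\<tau>. \<tau> \<in> {0<..1} \<Longrightarrow> \<exists>n::nat. norm (P \<tau> - of_nat n * 1) \<le> B \<and>
                     1/M^(n+1) < \<tau> \<and> \<tau> \<le> 1/M^n"
    using shift_bound[of P M 1, OF cP M shP] by blast
  obtain B' where B': "\<And>\<tau>. \<tau> \<in> {0<..1} \<Longrightarrow> \<exists>n::nat. norm (Q \<tau> - of_nat n * Complex 1 \<beta>) \<le> B' \<and>
                     1/M'^(n+1) < \<tau> \<and> \<tau> \<le> 1/M'^n"
    using shift_bound[of Q M' "Complex 1 \<beta>", OF cQ M' shQ] by blast
  have B0: "0 \<le> B"
  proof -
    obtain n :: nat where "norm (P 1 - of_nat n * 1) \<le> B" using B[of 1] by auto
    then show ?thesis using norm_ge_zero[of "P 1 - of_nat n * 1"] by linarith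
  qed
  have B'0: "0 \<le> B'"
  proof -
    obtain n :: nat where "norm (Q 1 - of_nat n * Complex 1 \<beta>) \<le> B'" using B'[of 1] by auto
    then show ?thesis using norm_ge_zero[of "Q 1 - of_nat n * Complex 1 \<beta>"] by linarith
  qed
  have PIm: "\<bar>Im (P \<tau>)\<bar> \<le> B" if tau: "\<tau> \<in> {0<..1}" for \<tau>
  proof -
    obtain n :: nat where "norm (P \<tau> - of_nat n * 1) \<le> B" using B[OF tau] by blast
    moreover have "\<bar>Im (P \<tau>)\<bar> = \<bar>Im (P \<tau> - of_nat n * 1)\<bar>" by simp
    moreover have "\<bar>Im (P \<tau> - of_nat n * 1)\<bar> \<le> norm (P \<tau> - of_nat n * 1)" by (rule abs_Im_le_cmod)
    ultimately show ?thesis by linarith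
  qed
  have QRe: "m0 - B' \<le> Re (Q x) \<and> Re (Q x) \<le> m1 + B'"
    if xin: "x \<in> {1/M'^m1..1/M'^m0}" for x :: real and m0 m1 :: nat
  proof -
    have a1: "0 < 1/M'^m1" using M' by simp
    have a2: "1/M'^m0 \<le> 1" using M' by simp
    have "0 < x" using a1 xin by (meson atLeastAtMost_iff less_le_trans)
    moreover have "x \<le> 1" using a2 xin by (meson atLeastAtMost_iff order_trans)
    ultimately have x: "x \<in> {0<..1}" by simp
    obtain n :: nat where n: "norm (Q x - of_nat n * Complex 1 \<beta>) \<le> B'" "1/M'^(n+1) < x" "x \<le> 1/M'^n"
      using B'[OF x] by blast
    have "1/M'^(n+1) < 1/M'^m0" using n xin by auto
    then have "M'^m0 < M'^(n+1)" using M' by (simp add: field_simps)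
    then have "m0 < n+1" using M' power_less_imp_less_exp by blast
    moreover have "1/M'^m1 \<le> 1/M'^n" using n xin by auto
    then have "M'^n \<le> M'^m1" using M' by (simp add: field_simps)
    then have "n \<le> m1" using M' power_le_imp_le_exp by blast
    moreover have "\<bar>Re (Q x) - n\<bar> \<le> B'"
    proof -
      have "Re (Q x) - n = Re (Q x - of_nat n * Complex 1 \<beta>)" by simp
      then show ?thesis using abs_Re_le_cmod[of "Q x - of_nat n * Complex 1 \<beta>"] n(1) by linarith
    qed
    ultimately show ?thesis by auto
  qed
  have one: "(1::real) \<in> {0<..1}" by simp
  have Pend: "P (1/M^K) = P 1 + of_nat K" for K
    using iterate_shift[of M P 1, OF M shP one, of K] by simp
  have Qend: "Q (1/M'^m) = Q 1 + of_nat m * Complex 1 \<beta>" for m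
    using iterate_shift[of M' Q "Complex 1 \<beta>", OF M' shQ one, of m] by simp
  define m0 :: nat where "m0 = nat \<lceil>Re (P 1) + B' + 1\<rceil>"
  define m1 :: nat where "m1 = m0 + nat \<lceil>(2*B+1)/\<beta>\<rceil>"
  define Xlo where "Xlo = real m0 - B' - 1"
  define Xhi where "Xhi = real m1 + B' + 1"
  define Ylo where "Ylo = Im (Q 1) + real m0 * \<beta>"
  define Yhi where "Yhi = Im (Q 1) + real m1 * \<beta>"
  define k :: int where "k = \<lceil>Ylo + B\<rceil>"
  define K :: nat where "K = nat \<lceil>Xhi - Re (P 1)\<rceil>"
  have m0: "Re (P 1) + B' + 1 \<le> real m0" unfolding m0_def by linarith
  have "(2*B+1)/\<beta> \<le> real (nat \<lceil>(2*B+1)/\<beta>\<rceil>)" by linarith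
  then have "2*B+1 \<le> real (nat \<lceil>(2*B+1)/\<beta>\<rceil>) * \<beta>" using \<beta> by (simp add: field_simps)
  then have m1: "2*B+1 \<le> (real m1 - real m0) * \<beta>" unfolding m1_def by simp
  have m01: "m0 < m1"
  proof -
    have "0 < (real m1 - real m0) * \<beta>" using m1 B0 by linarith
    then show ?thesis using \<beta> by (simp add: zero_less_mult_iff)
  qed
  have XloP: "Re (P 1) \<le> Xlo" using m0 by (simp add: Xlo_def)
  have Xlohi: "Xlo < Xhi" using m01 B'0 by (simp add: Xlo_def Xhi_def)
  have K: "Xhi \<le> Re (P 1) + real K" unfolding K_def by linarith
  have Ylohi: "Ylo < Yhi" using m01 \<beta> by (simp add: Ylo_def Yhi_def)
  have kband: "Ylo \<le> k - B" "k + B \<le> Yhi"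
  proof -
    show "Ylo \<le> k - B" unfolding k_def by linarith
    have "real_of_int k \<le> Ylo + B + 1" unfolding k_def by linarith
    moreover have "Yhi - Ylo = (real m1 - real m0) * \<beta>" by (simp add: Ylo_def Yhi_def algebra_simps)
    ultimately show "k + B \<le> Yhi" using m1 by linarith
  qed
  define c1 :: real where "c1 = 1/M^K"
  have c1: "0 < c1" "c1 \<le> 1" using M by (auto simp: c1_def)
  define p where "p = (\<lambda>t. P ((1-t)*1 + t*c1) + \<i> * of_int k)"
  have pathp0: "path (\<lambda>t. P ((1-t)*1 + t*c1))" "\<And>t. t \<in> {0..1} \<Longrightarrow> (1-t)*1 + t*c1 \<in> {c1..1}"
    using path_through[OF cP c1(1) c1(2) order_refl] by auto
  have pathp: "path p" unfolding p_def by (intro continuous_intros path_add pathp0(1)) (simp add: path_def continuous_intros)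
  have pmem: "\<And>t. t \<in> {0..1} \<Longrightarrow> (1-t)*1 + t*c1 \<in> {0<..1}"
    using pathp0(2) c1 by fastforce
  have p0: "p 0 = P 1 + \<i> * of_int k" by (simp add: p_def)
  have p1: "p 1 = P 1 + of_nat K + \<i> * of_int k" by (simp add: p_def c1_def Pend)
  have pIm: "Ylo \<le> Im (p t) \<and> Im (p t) \<le> Yhi" if "t \<in> {0..1}" for t
    using PIm[OF pmem[OF that]] kband by (auto simp: p_def)
  define d0 :: real where "d0 = 1/M'^m0"
  define d1 :: real where "d1 = 1/M'^m1"
  have d: "0 < d1" "d1 \<le> d0" "d0 \<le> 1"
    using M' m01 by (auto simp: d0_def d1_def field_simps intro: power_increasing)
  define q where "q = (\<lambda>t. Q ((1-t)*d0 + t*d1))"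
  have pathq: "path q" "\<And>t. t \<in> {0..1} \<Longrightarrow> (1-t)*d0 + t*d1 \<in> {d1..d0}"
    using path_through[OF cQ d] by (auto simp: q_def)
  have qmem: "\<And>t. t \<in> {0..1} \<Longrightarrow> (1-t)*d0 + t*d1 \<in> {0<..1}"
    using pathq(2) d by fastforce
  have q0: "q 0 = Q 1 + of_nat m0 * Complex 1 \<beta>" by (simp add: q_def d0_def Qend)
  have q1: "q 1 = Q 1 + of_nat m1 * Complex 1 \<beta>" by (simp add: q_def d1_def Qend)
  have qRe: "Xlo \<le> Re (q t) \<and> Re (q t) \<le> Xhi" if "t \<in> {0..1}" for t
    using QRe[of "(1-t)*d0 + t*d1" m1 m0] pathq(2)[OF that]
    by (auto simp: q_def d0_def d1_def Xlo_def Xhi_def)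
  have cpRe: "continuous_on {0..1} (\<lambda>t. Re (p t))"
    using pathp unfolding path_def by (intro continuous_intros)
  have "Re (p 0) \<le> Xlo" using XloP by (simp add: p0)
  moreover have "Xhi \<le> Re (p 1)" using K by (simp add: p1)
  ultimately obtain u1 v1 where uv1: "0 \<le> u1" "u1 \<le> v1" "v1 \<le> 1" "Re (p u1) = Xlo" "Re (p v1) = Xhi"
       "\<forall>t\<in>{u1..v1}. Xlo \<le> Re (p t) \<and> Re (p t) \<le> Xhi"
    using extract_interval[OF cpRe _ Xlohi] by blast
  have cqIm: "continuous_on {0..1} (\<lambda>t. Im (q t))"
    using pathq(1) unfolding path_def by (intro continuous_intros)
  have "Im (q 0) \<le> Ylo" by (simp add: q0 Ylo_def)
  moreover have "Yhi \<le> Im (q 1)" by (simp add: q1 Yhi_def)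
  ultimately obtain u2 v2 where uv2: "0 \<le> u2" "u2 \<le> v2" "v2 \<le> 1" "Im (q u2) = Ylo" "Im (q v2) = Yhi"
       "\<forall>t\<in>{u2..v2}. Ylo \<le> Im (q t) \<and> Im (q t) \<le> Yhi"
    using extract_interval[OF cqIm _ Ylohi] by blast
  define F where "F = (\<lambda>s. toR2 (subpath u1 v1 p s))"
  define G where "G = (\<lambda>s. toR2 (subpath u2 v2 q s))"
  define a :: "real^2" where "a = vector [Xlo, Ylo]"
  define b :: "real^2" where "b = vector [Xhi, Yhi]"
  have pF: "path F"
    using path_subpath[OF pathp, of u1 v1] uv1 unfolding F_def path_def
    by (intro continuous_intros) auto
  have pG: "path G"
    using path_subpath[OF pathq(1), of u2 v2] uv2 unfolding G_def path_def
    by (intro continuous_intros) auto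
  have iF: "path_image F \<subseteq> cbox a b"
  proof
    fix z assume "z \<in> path_image F"
    then obtain s where s: "s \<in> {0..1}" "z = F s" by (auto simp: path_image_def)
    define t where "t = (v1-u1) * s + u1"
    have t: "t \<in> {u1..v1}" unfolding t_def using subpath_point[OF uv1(1-3) s(1)] .
    then have t01: "t \<in> {0..1}" using uv1 by auto
    have "z = toR2 (p t)" by (simp add: s F_def subpath_def t_def)
    then show "z \<in> cbox a b"
      using uv1(6) t pIm[OF t01] by (auto simp: mem_box_cart forall_2 a_def b_def)
  qed
  have iG: "path_image G \<subseteq> cbox a b"
  proof
    fix z assume "z \<in> path_image G"
    then obtain s where s: "s \<in> {0..1}" "z = G s" by (auto simp: path_image_def)
    define t where "t = (v2-u2) * s + u2"
    have t: "t \<in> {u2..v2}" unfolding t_def using subpath_point[OF uv2(1-3) s(1)] .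
    then have t01: "t \<in> {0..1}" using uv2 by auto
    have "z = toR2 (q t)" by (simp add: s G_def subpath_def t_def)
    then show "z \<in> cbox a b"
      using uv2(6) t qRe[OF t01] by (auto simp: mem_box_cart forall_2 a_def b_def)
  qed
  have e1: "pathstart F $ 1 = a $ 1" "pathfinish F $ 1 = b $ 1"
    using uv1 by (auto simp: pathstart_def pathfinish_def F_def subpath_def a_def b_def)
  have e2: "pathstart G $ 2 = a $ 2" "pathfinish G $ 2 = b $ 2"
    using uv2 by (auto simp: pathstart_def pathfinish_def G_def subpath_def a_def b_def)
  obtain z where zF: "z \<in> path_image F" and zG: "z \<in> path_image G"
    using fashoda[OF pF pG iF iG e1 e2] by blast
  obtain s1 where s1: "s1 \<in> {0..1}" "z = F s1" using zF by (auto simp: path_image_def)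
  obtain s2 where s2: "s2 \<in> {0..1}" "z = G s2" using zG by (auto simp: path_image_def)
  define t1 where "t1 = (v1-u1) * s1 + u1"
  define t2 where "t2 = (v2-u2) * s2 + u2"
  have t1: "t1 \<in> {0..1}" using subpath_point[OF uv1(1-3) s1(1)] uv1 by (auto simp: t1_def)
  have t2: "t2 \<in> {0..1}" using subpath_point[OF uv2(1-3) s2(1)] uv2 by (auto simp: t2_def)
  have "toR2 (p t1) = toR2 (q t2)" using s1 s2 by (simp add: F_def G_def subpath_def t1_def t2_def)
  then have "p t1 = q t2" by (rule toR2_inj)
  then have "P ((1-t1)*1 + t1*c1) + \<i> * of_int k = Q ((1-t2)*d0 + t2*d1)" by (simp add: p_def q_def)
  then show ?thesis using pmem[OF t1] qmem[OF t2] by blast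
qed

locale ifs_path =
  fixes N :: nat and S :: "nat \<Rightarrow> complex \<Rightarrow> complex" and r :: "nat \<Rightarrow> real"
  assumes N2: "2 \<le> N"
    and r: "\<And>j. j \<in> {1..N} \<Longrightarrow> 0 < r j \<and> r j < 1"
    and sim: "\<And>j z w. j \<in> {1..N} \<Longrightarrow> dist (S j z) (S j w) = r j * dist z w"
    and S10: "S 1 0 = 0" and SN1: "S N 1 = 1"
    and junc: "\<And>j. j \<in> {1..N-1} \<Longrightarrow> S j 1 = S (Suc j) 0"
begin

definition J :: "real \<Rightarrow> nat" where "J y = min N (nat \<lfloor>real N * y\<rfloor> + 1)"

definition G :: "(real \<Rightarrow> complex) \<Rightarrow> real \<Rightarrow> complex" where
  "G f y = S (J y) (f (real N * y - (real (J y) - 1)))"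

lemma J_range: "J y \<in> {1..N}"
  using N2 by (auto simp: J_def)

lemma G_piece:
  assumes j: "j \<in> {1..N}" and y: "(real j - 1) / N \<le> y" "y \<le> real j / N"
    and f0: "f 0 = 0" and f1: "f 1 = 1"
  shows "G f y = S j (f (real N * y - (real j - 1)))"
proof -
  have Npos: "0 < real N" using N2 by simp
  define z where "z = real N * y"
  have z: "real j - 1 \<le> z" "z \<le> real j" using y Npos by (auto simp: z_def field_simps)
  show ?thesis
  proof (cases "z < real j")
    case True
    then have "\<lfloor>z\<rfloor> = int j - 1" using z by (simp add: floor_eq_iff)
    then have "nat \<lfloor>z\<rfloor> + 1 = j" using j by auto
    then have "J y = j" using j by (simp add: J_def z_def[symmetric])
    then show ?thesis by (simp add: G_def)
  next
    case False
    then have zj: "z = real j" using z by simp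
    then have fl: "nat \<lfloor>z\<rfloor> + 1 = j + 1" by simp
    show ?thesis
    proof (cases "j = N")
      case True
      then have "J y = j" using fl by (simp add: J_def z_def[symmetric])
      then show ?thesis by (simp add: G_def)
    next
      case False
      then have jN: "j < N" using j by simp
      then have "J y = j + 1" using fl by (simp add: J_def z_def[symmetric])
      then have "G f y = S (Suc j) (f 0)" by (simp add: G_def z_def[symmetric] zj)
      also have "\<dots> = S j 1" using junc[of j] j jN f0 by simp
      also have "\<dots> = S j (f (real N * y - (real j - 1)))" using f1 zj by (simp add: z_def)
      finally show ?thesis .
    qed
  qed
qed

lemma J_piece: assumes "y \<in> {0..1}"
  shows "(real (J y) - 1) / N \<le> y" "y \<le> real (J y) / N"
proof -
  have Npos: "0 < real N" using N2 by simp
  define z where "z = real N * y"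
  have z: "0 \<le> z" "z \<le> real N" using assms Npos by (auto simp: z_def)
  have "real (J y) - 1 \<le> z"
  proof -
    have "real (J y) \<le> real (nat \<lfloor>z\<rfloor> + 1)" by (simp add: J_def z_def)
    moreover have "real (nat \<lfloor>z\<rfloor>) \<le> z" using z by linarith
    ultimately show ?thesis by simp
  qed
  moreover have "z \<le> real (J y)"
  proof (cases "nat \<lfloor>z\<rfloor> + 1 \<le> N")
    case True
    then have "J y = nat \<lfloor>z\<rfloor> + 1" by (simp add: J_def z_def)
    then show ?thesis using z by linarith
  next
    case False
    then have "J y = N" by (simp add: J_def z_def)
    then show ?thesis using z by simp
  qed
  ultimately show "(real (J y) - 1) / N \<le> y" "y \<le> real (J y) / N"
    using Npos by (auto simp: z_def field_simps)
qed


lemma G_cont: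
  assumes cf: "continuous_on {0..1} f" and f0: "f 0 = 0" and f1: "f 1 = 1"
  shows "continuous_on {0..1} (G f)"
proof -
  have Npos: "0 < real N" using N2 by simp
  have U: "{0..1} = (\<Union>j\<in>{1..N}. {(real j - 1)/N .. real j/N})"
  proof
    show "{0..1} \<subseteq> (\<Union>j\<in>{1..N}. {(real j - 1)/N .. real j/N})"
    proof
      fix y :: real assume y: "y \<in> {0..1}"
      have "y \<in> {(real (J y) - 1)/N .. real (J y)/N}" using J_piece[OF y] by simp
      then show "y \<in> (\<Union>j\<in>{1..N}. {(real j - 1)/N .. real j/N})" using J_range[of y] by blast
    qed
    show "(\<Union>j\<in>{1..N}. {(real j - 1)/N .. real j/N}) \<subseteq> {0..1}"
    proof clarify
      fix j y assume j: "j \<in> {1..N}" and y: "y \<in> {(real j - 1)/N .. real j/N}"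
      have "0 \<le> (real j - 1)/N" using j by simp
      moreover have "real j/N \<le> 1" using j Npos by simp
      ultimately show "y \<in> {0..1}" using y by auto
    qed
  qed
  have "continuous_on (\<Union>j\<in>{1..N}. {(real j - 1)/N .. real j/N}) (G f)"
  proof (rule continuous_on_closed_Union)
    fix j assume j: "j \<in> {1..N}"
    let ?I = "{(real j - 1)/N .. real j/N}"
    have "continuous_on ?I (\<lambda>y. S j (f (real N * y - (real j - 1))))"
    proof -
      have "lipschitz_on (r j) UNIV (S j)"
        by (rule lipschitz_onI) (simp_all add: sim[OF j] r[OF j] less_imp_le)
      then have cS: "continuous_on UNIV (S j)" by (rule lipschitz_on_continuous_on)
      have "continuous_on ?I (\<lambda>y. real N * y - (real j - 1))" by (intro continuous_intros)
      moreover have "(\<lambda>y. real N * y - (real j - 1)) ` ?I \<subseteq> {0..1}"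
        using Npos by (auto simp: field_simps)
      ultimately have "continuous_on ?I (\<lambda>y. f (real N * y - (real j - 1)))"
        by (rule continuous_on_compose2[OF cf])
      then show ?thesis using continuous_on_compose2[OF cS] by blast
    qed
    then show "continuous_on ?I (G f)"
      by (rule continuous_on_eq) (simp add: G_piece[OF j _ _ f0 f1])
  qed auto
  then show ?thesis using U by simp
qed


definition clamp :: "real \<Rightarrow> real" where "clamp x = max 0 (min 1 x)"

lemma clamp_in: "clamp x \<in> {0..1}" by (auto simp: clamp_def)
lemma clamp_id: "x \<in> {0..1} \<Longrightarrow> clamp x = x" by (auto simp: clamp_def)
lemma clamp_cont: "continuous_on UNIV clamp" unfolding clamp_def by (intro continuous_intros)

definition rho :: real where "rho = Max (r ` {1..N})"

lemma rho: "\<And>j. j \<in> {1..N} \<Longrightarrow> r j \<le> rho" "rho < 1" "0 < rho"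
proof -
  show "\<And>j. j \<in> {1..N} \<Longrightarrow> r j \<le> rho" unfolding rho_def by (rule Max_ge) auto
  have "rho \<in> r ` {1..N}" unfolding rho_def by (rule Max_in) (use N2 in auto)
  then obtain j where "j \<in> {1..N}" "rho = r j" by auto
  then show "rho < 1" "0 < rho" using r by auto
qed

definition S0 :: "(real \<Rightarrow>\<^sub>C complex) set" where
  "S0 = {f. apply_bcontfun f 0 = 0 \<and> apply_bcontfun f 1 = 1}"

definition T :: "(real \<Rightarrow>\<^sub>C complex) \<Rightarrow> (real \<Rightarrow>\<^sub>C complex)" where
  "T f = Bcontfun (\<lambda>x. G (apply_bcontfun f) (clamp x))"

lemma T_in:
  assumes f: "f \<in> S0"
  shows "(\<lambda>x. G (apply_bcontfun f) (clamp x)) \<in> bcontfun"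
proof -
  have f01: "apply_bcontfun f 0 = 0" "apply_bcontfun f 1 = 1" using f by (auto simp: S0_def)
  have cG: "continuous_on {0..1} (G (apply_bcontfun f))"
    by (rule G_cont[OF _ f01]) simp
  have c: "continuous_on UNIV (\<lambda>x. G (apply_bcontfun f) (clamp x))"
    by (rule continuous_on_compose2[OF cG clamp_cont]) (auto simp: clamp_def)
  have "compact (G (apply_bcontfun f) ` {0..1})" by (rule compact_continuous_image[OF cG]) simp
  then have "bounded (G (apply_bcontfun f) ` {0..1})" by (rule compact_imp_bounded)
  moreover have "range (\<lambda>x. G (apply_bcontfun f) (clamp x)) \<subseteq> G (apply_bcontfun f) ` {0..1}"
    using clamp_in by auto
  ultimately have "bounded (range (\<lambda>x. G (apply_bcontfun f) (clamp x)))" by (rule bounded_subset)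
  then show ?thesis using c by (simp add: bcontfun_def)
qed

lemma T_apply: "f \<in> S0 \<Longrightarrow> apply_bcontfun (T f) x = G (apply_bcontfun f) (clamp x)"
  unfolding T_def using T_in by (simp add: Bcontfun_inverse)

lemma T_S0: "f \<in> S0 \<Longrightarrow> T f \<in> S0"
proof -
  assume f: "f \<in> S0"
  have f01: "apply_bcontfun f 0 = 0" "apply_bcontfun f 1 = 1" using f by (auto simp: S0_def)
  have N1: "1 \<in> {1..N}" "N \<in> {1..N}" using N2 by auto
  have "G (apply_bcontfun f) 0 = S 1 (apply_bcontfun f (real N * 0 - (real 1 - 1)))"
    by (rule G_piece[OF N1(1) _ _ f01]) auto
  then have g0: "G (apply_bcontfun f) 0 = 0" using f01 S10 by simp
  have "G (apply_bcontfun f) 1 = S N (apply_bcontfun f (real N * 1 - (real N - 1)))"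
    by (rule G_piece[OF N1(2) _ _ f01]) (use N2 in auto)
  then have g1: "G (apply_bcontfun f) 1 = 1" using f01 SN1 by simp
  show "T f \<in> S0" using T_apply[OF f] g0 g1 by (simp add: S0_def clamp_id)
qed

lemma T_contr:
  assumes f: "f \<in> S0" and g: "g \<in> S0"
  shows "dist (T f) (T g) \<le> rho * dist f g"
proof (rule dist_bound)
  fix x
  define y where "y = clamp x"
  define j where "j = J y"
  have j: "j \<in> {1..N}" using J_range by (simp add: j_def)
  define z where "z = real N * y - (real j - 1)"
  have "dist (apply_bcontfun (T f) x) (apply_bcontfun (T g) x)
      = dist (S j (apply_bcontfun f z)) (S j (apply_bcontfun g z))"
    by (simp add: T_apply f g G_def y_def[symmetric] j_def[symmetric] z_def)
  also have "\<dots> = r j * dist (apply_bcontfun f z) (apply_bcontfun g z)" by (rule sim[OF j])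
  also have "\<dots> \<le> rho * dist f g"
    by (rule mult_mono) (use rho(1)[OF j] rho(3) dist_bounded in auto)
  finally show "dist (apply_bcontfun (T f) x) (apply_bcontfun (T g) x) \<le> rho * dist f g" .
qed

lemma closed_S0: "closed S0"
proof -
  have ev: "continuous_on UNIV (\<lambda>f::real \<Rightarrow>\<^sub>C complex. apply_bcontfun f x)" for x
  proof -
    have "lipschitz_on 1 UNIV (\<lambda>f::real \<Rightarrow>\<^sub>C complex. apply_bcontfun f x)"
      by (rule lipschitz_onI) (simp_all add: dist_bounded)
    then show ?thesis by (rule lipschitz_on_continuous_on)
  qed
  have "S0 = {f. apply_bcontfun f 0 = 0} \<inter> {f. apply_bcontfun f 1 = 1}" by (auto simp: S0_def)
  moreover have "closed {f::real \<Rightarrow>\<^sub>C complex. apply_bcontfun f 0 = 0}"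
    by (rule closed_Collect_eq[OF ev]) simp
  moreover have "closed {f::real \<Rightarrow>\<^sub>C complex. apply_bcontfun f 1 = 1}"
    by (rule closed_Collect_eq[OF ev]) simp
  ultimately show ?thesis by (metis closed_Int)
qed

lemma S0_ne: "S0 \<noteq> {}"
proof -
  have "(\<lambda>x. complex_of_real (clamp x)) \<in> bcontfun"
  proof -
    have "continuous_on UNIV (\<lambda>x. complex_of_real (clamp x))"
      using clamp_cont by (intro continuous_intros)
    moreover have "norm (complex_of_real (clamp x)) \<le> 1" for x using clamp_in[of x] by auto
    ultimately show ?thesis by (rule bcontfun_normI)
  qed
  then have "Bcontfun (\<lambda>x. complex_of_real (clamp x)) \<in> S0"
    by (simp add: S0_def Bcontfun_inverse clamp_def)
  then show ?thesis by blast
qed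

lemma coding_map:
  obtains \<pi> :: "real \<Rightarrow> complex" where "continuous_on UNIV \<pi>" "\<pi> 0 = 0" "\<pi> 1 = 1"
    "\<And>x. \<pi> x = G \<pi> (clamp x)"
proof -
  have "\<exists>!f\<in>S0. T f = f"
    by (rule Banach_fix[of S0 rho T]) (use closed_S0 S0_ne rho T_S0 T_contr in \<open>auto simp: complete_eq_closed\<close>)
  then obtain f where f: "f \<in> S0" "T f = f" by blast
  show ?thesis
  proof (rule that[of "apply_bcontfun f"])
    show "continuous_on UNIV (apply_bcontfun f)" by simp
    show "apply_bcontfun f 0 = 0" "apply_bcontfun f 1 = 1" using f by (auto simp: S0_def)
    show "apply_bcontfun f x = G (apply_bcontfun f) (clamp x)" for x
      using T_apply[OF f(1), of x] f(2) by simp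
  qed
qed

end

context ifs_path begin

lemma S_inj: "j \<in> {1..N} \<Longrightarrow> S j z = S j w \<Longrightarrow> z = w"
  using sim[of j z w] r[of j] by auto

lemma S_cont: "j \<in> {1..N} \<Longrightarrow> continuous_on A (S j)"
proof -
  assume j: "j \<in> {1..N}"
  have "lipschitz_on (r j) UNIV (S j)"
    by (rule lipschitz_onI) (simp_all add: sim[OF j] r[OF j] less_imp_le)
  then show ?thesis using lipschitz_on_continuous_on continuous_on_subset by blast
qed

lemma coding_eq:
  assumes c: "\<And>x. \<pi> x = G \<pi> (clamp x)" and p0: "\<pi> 0 = 0" and p1: "\<pi> 1 = 1"
    and j: "j \<in> {1..N}" and y: "y \<in> {0..1}"
  shows "\<pi> ((real j - 1 + y) / N) = S j (\<pi> y)"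
proof -
  have Npos: "0 < real N" using N2 by simp
  define x where "x = (real j - 1 + y) / N"
  have x1: "(real j - 1) / N \<le> x" "x \<le> real j / N" using y Npos by (auto simp: x_def divide_right_mono)
  have "0 \<le> (real j - 1) / N" using j by simp
  moreover have "real j / N \<le> 1" using j Npos by simp
  ultimately have x01: "x \<in> {0..1}" using x1 by auto
  have "\<pi> x = G \<pi> x" using c[of x] clamp_id[OF x01] by simp
  also have "\<dots> = S j (\<pi> (real N * x - (real j - 1)))" by (rule G_piece[OF j x1 p0 p1])
  also have "real N * x - (real j - 1) = y" using Npos by (simp add: x_def)
  finally show ?thesis by (simp add: x_def)
qed

lemma coding_piece:
  assumes c: "\<And>x. \<pi> x = G \<pi> (clamp x)" and x: "x \<in> {0..1}"
  shows "\<pi> x = S (J x) (\<pi> (real N * x - (real (J x) - 1)))"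
    and "real N * x - (real (J x) - 1) \<in> {0..1}"
proof -
  have Npos: "0 < real N" using N2 by simp
  show "\<pi> x = S (J x) (\<pi> (real N * x - (real (J x) - 1)))"
    using c[of x] clamp_id[OF x] by (simp add: G_def)
  have "(real (J x) - 1) \<le> real N * x" "real N * x \<le> real (J x)"
    using J_piece[OF x] Npos by (auto simp: divide_le_eq le_divide_eq mult.commute)
  then show "real N * x - (real (J x) - 1) \<in> {0..1}" by auto
qed

end

locale ifs_arc = ifs_path +
  fixes \<gamma> :: "complex set"
  assumes cg: "compact \<gamma>" and gne: "\<gamma> \<noteq> {}" and ginv: "\<gamma> = (\<Union>j\<in>{1..N}. S j ` \<gamma>)"
    and arc1: "\<And>j. j \<in> {1..N-1} \<Longrightarrow> S j ` \<gamma> \<inter> S (Suc j) ` \<gamma> = {S (Suc j) 0}"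
    and arc2: "\<And>j k. j \<in> {1..N} \<Longrightarrow> k \<in> {1..N} \<Longrightarrow> (j > k + 1 \<or> k > j + 1) \<Longrightarrow>
                  S j ` \<gamma> \<inter> S k ` \<gamma> = {}"
begin

lemma Sj_sub: "j \<in> {1..N} \<Longrightarrow> S j ` \<gamma> \<subseteq> \<gamma>"
  using ginv by blast

lemma infdist_S: assumes j: "j \<in> {1..N}" shows "infdist (S j p) \<gamma> \<le> r j * infdist p \<gamma>"
proof -
  obtain a where a: "a \<in> \<gamma>" "infdist p \<gamma> = dist p a"
    using infdist_attains_inf[OF compact_imp_closed[OF cg] gne] by blast
  have "infdist (S j p) \<gamma> \<le> infdist (S j p) (S j ` \<gamma>)"
    by (rule infdist_mono) (use Sj_sub[OF j] gne in auto)
  also have "\<dots> \<le> dist (S j p) (S j a)" by (rule infdist_le) (use a in auto)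
  also have "\<dots> = r j * infdist p \<gamma>" using sim[OF j] a by simp
  finally show ?thesis .
qed

lemma coding_in_gamma:
  assumes c: "\<And>x. \<pi> x = G \<pi> (clamp x)" and cont: "continuous_on UNIV \<pi>"
  shows "x \<in> {0..1} \<Longrightarrow> \<pi> x \<in> \<gamma>"
proof -
  let ?h = "\<lambda>x. infdist (\<pi> x) \<gamma>"
  have ch: "continuous_on {0..1} ?h"
    by (intro continuous_intros continuous_on_subset[OF cont]) auto
  obtain x0 where x0: "x0 \<in> {0..1}" "\<And>x. x \<in> {0..1} \<Longrightarrow> ?h x \<le> ?h x0"
    using continuous_attains_sup[OF compact_Icc _ ch] by auto
  define y where "y = real N * x0 - (real (J x0) - 1)"
  have y: "y \<in> {0..1}" using coding_piece(2)[OF c x0(1)] by (simp add: y_def)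
  have "?h x0 = infdist (S (J x0) (\<pi> y)) \<gamma>" using coding_piece(1)[OF c x0(1)] by (simp add: y_def)
  also have "\<dots> \<le> r (J x0) * ?h y" by (rule infdist_S[OF J_range])
  also have "\<dots> \<le> rho * ?h x0"
    by (rule mult_mono) (use rho(1)[OF J_range] x0(2)[OF y] rho(3) infdist_nonneg in auto)
  finally have "?h x0 \<le> rho * ?h x0" .
  then have "?h x0 \<le> 0" using rho(2) infdist_nonneg[of "\<pi> x0" \<gamma>]
    by (metis mult_le_cancel_right1 not_le)
  then have "?h x = 0" if "x \<in> {0..1}" for x using x0(2)[OF that] infdist_nonneg[of "\<pi> x" \<gamma>] by linarith
  then show "x \<in> {0..1} \<Longrightarrow> \<pi> x \<in> \<gamma>"
    using in_closure_iff_infdist_zero[OF gne] closure_closed[OF compact_imp_closed[OF cg]] by blast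
qed


lemma pi_exists:
  obtains \<pi> where "continuous_on UNIV \<pi>" "\<pi> 0 = 0" "\<pi> 1 = 1" "\<And>x. \<pi> x = G \<pi> (clamp x)"
    "\<And>x. x \<in> {0..1} \<Longrightarrow> \<pi> x \<in> \<gamma>"
proof -
  obtain \<pi> where h: "continuous_on UNIV \<pi>" "\<pi> 0 = 0" "\<pi> 1 = 1" "\<And>x. \<pi> x = G \<pi> (clamp x)"
    apply (rule coding_map)
    apply (rule that)
    apply assumption+
    done
  show ?thesis
  proof (rule that[OF h])
    show "\<And>x. x \<in> {0..1} \<Longrightarrow> \<pi> x \<in> \<gamma>" by (rule coding_in_gamma[OF h(4) h(1)])
  qed
qed

lemma zero_one_in: "0 \<in> \<gamma>" "1 \<in> \<gamma>"
proof -
  obtain \<pi> where h0: "continuous_on UNIV \<pi>" and h: "\<pi> 0 = 0" "\<pi> 1 = 1"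
    and h4: "\<And>x. \<pi> x = G \<pi> (clamp x)" and h3: "\<And>x. x \<in> {0..1} \<Longrightarrow> \<pi> x \<in> \<gamma>"
    apply (rule pi_exists)
    apply (rule that)
    apply assumption+
    done
  have "\<pi> 0 \<in> \<gamma>" "\<pi> 1 \<in> \<gamma>" by (rule h3, simp)+
  then show "0 \<in> \<gamma>" "1 \<in> \<gamma>" using h(1,2) by simp_all
qed

lemma zero_notin: assumes j: "j \<in> {2..N}" shows "0 \<notin> S j ` \<gamma>"
proof
  assume z: "0 \<in> S j ` \<gamma>"
  have z1: "0 \<in> S 1 ` \<gamma>" using zero_one_in(1) S10 by (metis image_eqI)
  have one: "1 \<in> {1..N}" using N2 by auto
  show False
  proof (cases "j = 2")
    case True
    have "1 \<in> {1..N-1}" using N2 by auto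
    moreover have s2: "Suc 1 = 2" by simp
    ultimately have A: "S 1 ` \<gamma> \<inter> S 2 ` \<gamma> = {S 2 0}" using arc1[of 1] by (simp add: numeral_2_eq_2)
    have "0 \<in> S 1 ` \<gamma> \<inter> S 2 ` \<gamma>" using z z1 True by blast
    then have "0 = S 2 0" using A by blast
    also have "\<dots> = S 1 1" using junc[of 1] N2 by (auto simp: numeral_2_eq_2)
    finally have "S 1 1 = S 1 0" using S10 by simp
    then show False using S_inj[OF one, of 1 0] by simp
  next
    case False
    then have "j > 1 + 1" using j by auto
    then have "S j ` \<gamma> \<inter> S 1 ` \<gamma> = {}" using arc2[of j 1] j one by auto
    then show False using z z1 by blast
  qed
qed

lemma one_notin: assumes j: "j \<in> {1..N-1}" shows "1 \<notin> S j ` \<gamma>"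
proof
  assume z: "1 \<in> S j ` \<gamma>"
  have nN: "N \<in> {1..N}" using N2 by auto
  have z1: "1 \<in> S N ` \<gamma>" using zero_one_in(2) SN1 by (metis image_eqI)
  show False
  proof (cases "j = N - 1")
    case True
    have "Suc (N - 1) = N" using N2 by simp
    then have A: "S (N-1) ` \<gamma> \<inter> S N ` \<gamma> = {S N 0}" using arc1[OF j] True by simp
    have "1 \<in> S (N-1) ` \<gamma> \<inter> S N ` \<gamma>" using z z1 True by blast
    then have "1 = S N 0" using A by blast
    then have "S N 1 = S N 0" using SN1 by simp
    then show False using S_inj[OF nN, of 1 0] by simp
  next
    case False
    then have "N > j + 1" using j by auto
    then have "S N ` \<gamma> \<inter> S j ` \<gamma> = {}" using arc2[of N j] j nN by auto
    then show False using z z1 by blast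
  qed
qed

lemma pi_ne0:
  assumes c: "\<And>x. \<pi> x = G \<pi> (clamp x)" and g: "\<And>x. x \<in> {0..1} \<Longrightarrow> \<pi> x \<in> \<gamma>"
  shows "x \<in> {0<..1} \<Longrightarrow> \<pi> x \<noteq> 0"
proof -
  have Npos: "1 < real N" using N2 by simp
  have ind: "\<forall>x. (1/N)^k < x \<and> x \<le> 1 \<longrightarrow> \<pi> x \<noteq> 0" for k
  proof (induction k)
    case 0 then show ?case by auto
  next
    case (Suc k)
    show ?case
    proof (intro allI impI)
      fix x assume x: "(1/N)^Suc k < x \<and> x \<le> 1"
      have "0 \<le> (1/N)^Suc k" by simp
      then have "0 \<le> x" "x \<le> 1" using x by linarith+
      then have x01: "x \<in> {0..1}" by simp
      define y where "y = real N * x - (real (J x) - 1)"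
      have y: "y \<in> {0..1}" using coding_piece(2)[OF c x01] by (simp add: y_def)
      have px: "\<pi> x = S (J x) (\<pi> y)" using coding_piece(1)[OF c x01] by (simp add: y_def)
      show "\<pi> x \<noteq> 0"
      proof (cases "J x = 1")
        case True
        then have yx: "y = real N * x" by (simp add: y_def)
        have "(1/N)^k < real N * x" using x Npos by (auto simp: divide_less_eq mult.commute)
        then have "(1/N)^k < y \<and> y \<le> 1" using y yx by simp
        then have "\<pi> y \<noteq> 0" using Suc.IH by blast
        then show ?thesis using px True S_inj[of 1 "\<pi> y" 0] S10 N2 by auto
      next
        case False
        then have "J x \<in> {2..N}" using J_range[of x] by auto
        then have "0 \<notin> S (J x) ` \<gamma>" by (rule zero_notin)
        moreover have "\<pi> x \<in> S (J x) ` \<gamma>" using px g[OF y] by simp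
        ultimately show ?thesis by force
      qed
    qed
  qed
  assume x: "x \<in> {0<..1}"
  obtain k where "(1/N)^k < x" using real_arch_pow_inv[of x "1/N"] x Npos by auto
  then have "(1/N)^k < x \<and> x \<le> 1" using x by auto
  then show "\<pi> x \<noteq> 0" using spec[OF ind[of k], of x] by (rule mp[rotated])
qed

lemma pi_ne1:
  assumes c: "\<And>x. \<pi> x = G \<pi> (clamp x)" and g: "\<And>x. x \<in> {0..1} \<Longrightarrow> \<pi> x \<in> \<gamma>"
  shows "x \<in> {0..<1} \<Longrightarrow> \<pi> x \<noteq> 1"
proof -
  have Npos: "1 < real N" using N2 by simp
  have nN: "N \<in> {1..N}" using N2 by auto
  have ind: "\<forall>x. 0 \<le> x \<and> x < 1 - (1/N)^k \<longrightarrow> \<pi> x \<noteq> 1" for k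
  proof (induction k)
    case 0 then show ?case by auto
  next
    case (Suc k)
    show ?case
    proof (intro allI impI)
      fix x assume x: "0 \<le> x \<and> x < 1 - (1/N)^Suc k"
      have "0 \<le> (1/N)^Suc k" by simp
      then have "0 \<le> x" "x \<le> 1" using x by linarith+
      then have x01: "x \<in> {0..1}" by simp
      define y where "y = real N * x - (real (J x) - 1)"
      have y: "y \<in> {0..1}" using coding_piece(2)[OF c x01] by (simp add: y_def)
      have px: "\<pi> x = S (J x) (\<pi> y)" using coding_piece(1)[OF c x01] by (simp add: y_def)
      show "\<pi> x \<noteq> 1"
      proof (cases "J x = N")
        case True
        then have yx: "1 - y = real N * (1 - x)" by (simp add: y_def algebra_simps)
        have "(1/N)^Suc k = (1/N)^k / N" by simp
        then have "(1/N)^k / N < 1 - x" using x by linarith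
        then have "(1/N)^k < (1 - x) * N" using Npos by (simp add: divide_less_eq)
        then have "(1/N)^k < real N * (1 - x)" by (simp add: mult.commute)
        then have "0 \<le> y \<and> y < 1 - (1/N)^k" using y yx by simp
        then have "\<pi> y \<noteq> 1" using Suc.IH by blast
        then show ?thesis using px True S_inj[OF nN, of "\<pi> y" 1] SN1 by auto
      next
        case False
        then have "J x \<in> {1..N-1}" using J_range[of x] by auto
        then have "1 \<notin> S (J x) ` \<gamma>" by (rule one_notin)
        moreover have "\<pi> x \<in> S (J x) ` \<gamma>" using px g[OF y] by simp
        ultimately show ?thesis by force
      qed
    qed
  qed
  assume x: "x \<in> {0..<1}"
  obtain k where "(1/N)^k < 1 - x" using real_arch_pow_inv[of "1 - x" "1/N"] x Npos by auto
  then have "0 \<le> x \<and> x < 1 - (1/N)^k" using x by auto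
  then show "\<pi> x \<noteq> 1" using spec[OF ind[of k], of x] by (rule mp[rotated])
qed

end

lemma log_shift:
  fixes w :: "real \<Rightarrow> complex" and M :: real and c :: complex
  assumes cw: "continuous_on {0<..1} w" and nz: "\<And>\<tau>. \<tau> \<in> {0<..1} \<Longrightarrow> w \<tau> \<noteq> 0"
    and M: "1 \<le> M" and sh: "\<And>\<tau>. \<tau> \<in> {0<..1} \<Longrightarrow> w (\<tau>/M) = c * w \<tau>"
  obtains L lam0 where "continuous_on {0<..1} L" "\<And>\<tau>. \<tau> \<in> {0<..1} \<Longrightarrow> w \<tau> = exp (L \<tau>)"
    "\<And>\<tau>. \<tau> \<in> {0<..1} \<Longrightarrow> L (\<tau>/M) = L \<tau> + lam0" "exp lam0 = c"
proof -
  have cvx: "convex {0<..(1::real)}" by (rule convex_real_interval)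
  obtain L where cL: "continuous_on {0<..1} L" and eL: "\<And>\<tau>. \<tau> \<in> {0<..1} \<Longrightarrow> w \<tau> = exp (L \<tau>)"
    using continuous_logarithm_on_contractible[OF cw convex_imp_contractible[OF cvx] nz] by blast
  have div: "\<tau>/M \<in> {0<..1}" if "\<tau> \<in> {0<..1}" for \<tau>
  proof -
    have "\<tau>/M \<le> \<tau>" using that M by (simp add: divide_le_eq mult_le_cancel_left1 mult.commute)
    moreover have "0 < \<tau>/M" using that M by simp
    ultimately show ?thesis using that by simp
  qed
  define D where "D \<tau> = L (\<tau>/M) - L \<tau>" for \<tau>
  have cD: "continuous_on {0<..1} D"
  proof -
    have "continuous_on {0<..1} (\<lambda>\<tau>. \<tau>/M)" using M by (intro continuous_intros) auto
    moreover have "(\<lambda>\<tau>. \<tau>/M) ` {0<..1} \<subseteq> {0<..1}" using div by (rule image_subsetI)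
    ultimately have "continuous_on {0<..1} (\<lambda>\<tau>. L (\<tau>/M))"
      by (rule continuous_on_compose2[OF cL])
    then show ?thesis unfolding D_def by (intro continuous_intros cL)
  qed
  have eD: "exp (D \<tau>) = c" if t: "\<tau> \<in> {0<..1}" for \<tau>
  proof -
    have "exp (D \<tau>) = exp (L (\<tau>/M)) / exp (L \<tau>)" by (simp add: D_def exp_diff)
    also have "\<dots> = w (\<tau>/M) / w \<tau>" using eL[OF t] eL[OF div[OF t]] by simp
    also have "\<dots> = c" using sh[OF t] nz[OF t] by simp
    finally show ?thesis .
  qed
  have "D constant_on {0<..1}"
  proof (rule continuous_discrete_range_constant[OF _ cD])
    show "connected {0<..(1::real)}" by simp
    fix x :: real assume x: "x \<in> {0<..1}"
    show "\<exists>e>0. \<forall>y. y \<in> {0<..1} \<and> D y \<noteq> D x \<longrightarrow> e \<le> norm (D y - D x)"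
    proof (intro exI[of _ "2*pi"] conjI allI impI)
      show "0 < 2*pi" by simp
      fix y assume y: "y \<in> {0<..1} \<and> D y \<noteq> D x"
      then have "exp (D y) = exp (D x)" using eD x by simp
      then obtain n :: int where n: "D y = D x + (of_int (2 * n) * pi) * \<i>" by (auto simp: exp_eq)
      then have "n \<noteq> 0" using y by auto
      then have "1 \<le> \<bar>real_of_int n\<bar>" by linarith
      have "norm (D y - D x) = norm ((of_int (2 * n) * pi) * \<i>)" using n by simp
      also have "\<dots> = 2 * pi * \<bar>real_of_int n\<bar>" by (simp add: norm_mult abs_mult)
      finally show "2*pi \<le> norm (D y - D x)" using \<open>1 \<le> \<bar>real_of_int n\<bar>\<close> by simp
    qed
  qed
  then obtain lam0 where lam: "\<And>\<tau>. \<tau> \<in> {0<..1} \<Longrightarrow> D \<tau> = lam0" by (auto simp: constant_on_def)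
  have e1: "exp lam0 = c" using eD[of 1] lam[of 1] by simp
  have e2: "\<And>\<tau>. \<tau> \<in> {0<..1} \<Longrightarrow> L (\<tau>/M) = L \<tau> + lam0"
  proof -
    fix \<tau> :: real assume "\<tau> \<in> {0<..1}"
    then have "L (\<tau>/M) - L \<tau> = lam0" using lam unfolding D_def by blast
    then show "L (\<tau>/M) = L \<tau> + lam0" by (simp add: algebra_simps)
  qed
  show ?thesis by (rule that[OF cL eL e2 e1])
qed

lemma simil_diff:
  "simil r a rf b z - simil r a rf b w = complex_of_real r * cis a * (if rf then cnj (z - w) else z - w)"
  by (simp add: simil_def algebra_simps)

lemma simil_dist:
  assumes "0 < r" shows "dist (simil r a rf b z) (simil r a rf b w) = r * dist z w"
proof -
  have "dist (simil r a rf b z) (simil r a rf b w) = norm (complex_of_real r * cis a * (if rf then cnj (z - w) else z - w))"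
    by (simp add: dist_norm simil_diff)
  also have "\<dots> = r * norm (z - w)"
  proof -
    have "norm (if rf then cnj (z - w) else z - w) = norm (z - w)"
      by (cases rf) (simp_all only: if_True if_False complex_mod_cnj)
    then show ?thesis using assms by (simp only: norm_mult norm_of_real abs_of_pos norm_cis mult_1_right)
  qed
  finally show ?thesis by (simp add: dist_norm)
qed

lemma setup_interp:
  fixes N :: nat and r \<alpha> :: "nat \<Rightarrow> real" and rf :: "nat \<Rightarrow> bool"
    and b :: "nat \<Rightarrow> complex" and \<gamma> :: "complex set" and S
  assumes S_def: "S = (\<lambda>j. simil (r j) (\<alpha> j) (rf j) (b j))"
  assumes data: "IFS_data N r \<alpha> rf b"
    and arc: "IFS_arc N S \<gamma>"
  shows "ifs_arc N S r \<gamma>"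
proof -
  have d: "2 \<le> N" "\<And>j. j \<in> {1..N} \<Longrightarrow> 0 < r j \<and> r j < 1" using data by (auto simp: IFS_data_def)
  have p: "normalized_IFS_path N S \<gamma>" using arc by (simp add: IFS_arc_def)
  show ?thesis
  proof (unfold_locales)
    show "2 \<le> N" by (rule d(1))
    show "\<And>j. j \<in> {1..N} \<Longrightarrow> 0 < r j \<and> r j < 1" by (rule d(2))
    show "\<And>j z w. j \<in> {1..N} \<Longrightarrow> dist (S j z) (S j w) = r j * dist z w"
      using d(2) simil_dist by (simp add: S_def)
    show "S 1 0 = 0" "S N 1 = 1" "\<And>j. j \<in> {1..N - 1} \<Longrightarrow> S j 1 = S (Suc j) 0"
      using p by (auto simp: normalized_IFS_path_def)
    show "compact \<gamma>" "\<gamma> \<noteq> {}" "\<gamma> = (\<Union>j\<in>{1..N}. S j ` \<gamma>)"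
      using p by (auto simp: normalized_IFS_path_def is_attractor_def)
    show "\<And>j. j \<in> {1..N - 1} \<Longrightarrow> S j ` \<gamma> \<inter> S (Suc j) ` \<gamma> = {S (Suc j) 0}"
      using arc by (simp add: IFS_arc_def)
    have A: "\<forall>j\<in>{1..N}. \<forall>k\<in>{1..N}. (j > k + 1 \<or> k > j + 1) \<longrightarrow> S j ` \<gamma> \<inter> S k ` \<gamma> = {}"
      using arc unfolding IFS_arc_def by blast
    show "\<And>j k. j \<in> {1..N} \<Longrightarrow> k \<in> {1..N} \<Longrightarrow> k + 1 < j \<or> j + 1 < k \<Longrightarrow> S j ` \<gamma> \<inter> S k ` \<gamma> = {}"
      by (rule A[rule_format])
  qed
qed

lemma cis_eq_1_int: assumes "cis x = 1" shows "\<exists>n::int. x = 2 * pi * n"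
proof -
  have "exp (\<i> * complex_of_real x) = 1" using assms by (simp add: cis_conv_exp)
  then obtain n :: int where "Im (\<i> * complex_of_real x) = of_int (2 * n) * pi" by (auto simp: exp_eq_1)
  then have "x = 2 * pi * of_int n" by simp
  then show ?thesis by blast
qed

lemma main_contra:
  fixes N :: nat and r \<alpha> :: "nat \<Rightarrow> real" and rf :: "nat \<Rightarrow> bool"
    and b :: "nat \<Rightarrow> complex" and \<gamma> :: "complex set" and S and t s :: nat and q :: real
  assumes S_def: "S = (\<lambda>j. simil (r j) (\<alpha> j) (rf j) (b j))"
    and A: "ifs_arc N S r \<gamma>"
    and o1: "\<not> rf 1" and oN: "\<not> rf N"
    and ts: "r 1 ^ t = r N ^ s" and qirr: "q \<notin> \<rat>" and ang: "real t * \<alpha> 1 - real s * \<alpha> N = 2 * pi * q"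
    and i: "i \<in> {1..N-1}" and rfi: "rf i = rf (Suc i)"
  shows False
proof -
  interpret A: ifs_arc N S r \<gamma> by (rule A)
  have N2: "2 \<le> N" by (rule A.N2)
  have one: "1 \<in> {1..N}" and nN: "N \<in> {1..N}" using N2 by auto
  have i1: "i \<in> {1..N}" "Suc i \<in> {1..N}" using i by auto
  have r1: "0 < r 1" "r 1 < 1" using A.r[OF one] by auto
  have rN: "0 < r N" "r N < 1" using A.r[OF nN] by auto
  have s0: "s \<noteq> 0"
  proof
    assume "s = 0"
    then have "r 1 ^ t = 1" using ts by simp
    then have "t = 0" using r1 by (metis less_numeral_extra(4) power_0 power_inject_exp')
    then have "q = 0" using ang \<open>s = 0\<close> by simp
    then show False using qirr by simp
  qed
  have t0: "t \<noteq> 0"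
  proof
    assume "t = 0"
    then have "r N ^ s = 1" using ts by simp
    then have "s = 0" using rN by (metis less_numeral_extra(4) power_0 power_inject_exp')
    then show False using s0 by simp
  qed
  obtain \<pi> where h1: "continuous_on UNIV \<pi>" and h2: "\<pi> 0 = 0" and h3: "\<pi> 1 = 1"
    and h4: "\<And>x. \<pi> x = A.G \<pi> (A.clamp x)" and h5: "\<And>x. x \<in> {0..1} \<Longrightarrow> \<pi> x \<in> \<gamma>"
    apply (rule A.pi_exists)
    apply (rule that)
    apply assumption+
    done
  have ne0: "\<And>x. x \<in> {0<..1} \<Longrightarrow> \<pi> x \<noteq> 0" by (rule A.pi_ne0[OF h4 h5])
  have ne1: "\<And>x. x \<in> {0..<1} \<Longrightarrow> \<pi> x \<noteq> 1" by (rule A.pi_ne1[OF h4 h5])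
  define q1 where "q1 = complex_of_real (r 1) * cis (\<alpha> 1)"
  define qN where "qN = complex_of_real (r N) * cis (\<alpha> N)"
  define \<sigma> where "\<sigma> z = (if rf i then cnj z else z)" for z
  have \<sigma>mult: "\<sigma> (a * c) = \<sigma> a * \<sigma> c" for a c by (simp add: \<sigma>_def)
  have \<sigma>norm: "norm (\<sigma> a) = norm a" for a by (simp add: \<sigma>_def)
  have \<sigma>inj: "\<sigma> a = \<sigma> c \<Longrightarrow> a = c" for a c by (auto simp: \<sigma>_def split: if_splits)
  have S1eq: "S 1 z = q1 * z" for z
    using simil_diff[of "r 1" "\<alpha> 1" "rf 1" "b 1" z 0] A.S10 o1 by (simp add: S_def q1_def)
  have SNeq: "S N z - 1 = qN * (z - 1)" for z
    using simil_diff[of "r N" "\<alpha> N" "rf N" "b N" z 1] A.SN1 oN by (simp add: S_def qN_def)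
  define p where "p = S i 1"
  have p2: "p = S (Suc i) 0" using A.junc[OF i] by (simp add: p_def)
  have Sieq: "S i z - p = complex_of_real (r i) * cis (\<alpha> i) * \<sigma> (z - 1)" for z
    using simil_diff[of "r i" "\<alpha> i" "rf i" "b i" z 1] by (simp add: S_def p_def \<sigma>_def)
  have Si1eq: "S (Suc i) z - p = complex_of_real (r (Suc i)) * cis (\<alpha> (Suc i)) * \<sigma> z" for z
    using simil_diff[of "r (Suc i)" "\<alpha> (Suc i)" "rf (Suc i)" "b (Suc i)" z 0] rfi
    by (simp add: S_def p2 \<sigma>_def)
  have Npos: "1 < real N" using N2 by simp
  have ydiv: "y / real N ^ n \<in> {0..1}" if "y \<in> {0..1}" for y n
  proof -
    have "1 \<le> real N ^ n" using Npos by simp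
    then have "y / real N ^ n \<le> y" using that by (simp add: divide_le_eq mult_le_cancel_left1 mult.commute)
    then show ?thesis using that by simp
  qed
  have pi1: "\<pi> (y / real N ^ n) = q1 ^ n * \<pi> y" if y: "y \<in> {0..1}" for y n
  proof (induction n)
    case 0 then show ?case by simp
  next
    case (Suc n)
    have "\<pi> ((real 1 - 1 + y / real N ^ n) / real N) = S 1 (\<pi> (y / real N ^ n))"
      by (rule A.coding_eq[OF h4 h2 h3 one ydiv[OF y]])
    moreover have "(real 1 - 1 + y / real N ^ n) / real N = y / real N ^ Suc n" by simp
    ultimately show ?case using Suc S1eq by (simp add: ac_simps)
  qed
  have piN: "\<pi> (1 - y / real N ^ n) - 1 = qN ^ n * (\<pi> (1 - y) - 1)" if y: "y \<in> {0..1}" for y n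
  proof (induction n)
    case 0 then show ?case by simp
  next
    case (Suc n)
    have y': "1 - y / real N ^ n \<in> {0..1}" using ydiv[OF y, of n] by auto
    have "\<pi> ((real N - 1 + (1 - y / real N ^ n)) / real N) = S N (\<pi> (1 - y / real N ^ n))"
      by (rule A.coding_eq[OF h4 h2 h3 nN y'])
    moreover have "(real N - 1 + (1 - y / real N ^ n)) / real N = 1 - y / real N ^ Suc n"
      using Npos by (simp add: field_simps)
    ultimately have "\<pi> (1 - y / real N ^ Suc n) - 1 = qN * (\<pi> (1 - y / real N ^ n) - 1)"
      using SNeq by simp
    then show ?case using Suc by simp
  qed
  define u where "u \<tau> = S i (\<pi> (1 - \<tau>)) - p" for \<tau>
  define v where "v x = S (Suc i) (\<pi> x) - p" for x
  define c where "c = \<sigma> (qN ^ s)"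
  define d where "d = \<sigma> (q1 ^ t)"
  have ush: "u (\<tau> / real N ^ s) = c * u \<tau>" if \<tau>: "\<tau> \<in> {0<..1}" for \<tau>
  proof -
    have \<tau>': "\<tau> \<in> {0..1}" using \<tau> by auto
    have "u (\<tau> / real N ^ s) = complex_of_real (r i) * cis (\<alpha> i) * \<sigma> (\<pi> (1 - \<tau> / real N ^ s) - 1)"
      by (simp add: u_def Sieq)
    also have "\<dots> = complex_of_real (r i) * cis (\<alpha> i) * \<sigma> (qN ^ s * (\<pi> (1 - \<tau>) - 1))"
      by (simp add: piN[OF \<tau>'])
    also have "\<dots> = c * u \<tau>" by (simp add: u_def Sieq c_def \<sigma>mult)
    finally show ?thesis .
  qed
  have vsh: "v (x / real N ^ t) = d * v x" if x: "x \<in> {0<..1}" for x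
  proof -
    have x': "x \<in> {0..1}" using x by auto
    have "v (x / real N ^ t) = complex_of_real (r (Suc i)) * cis (\<alpha> (Suc i)) * \<sigma> (\<pi> (x / real N ^ t))"
      by (simp add: v_def Si1eq)
    also have "\<dots> = complex_of_real (r (Suc i)) * cis (\<alpha> (Suc i)) * \<sigma> (q1 ^ t * \<pi> x)"
      by (simp add: pi1[OF x'])
    also have "\<dots> = d * v x" by (simp add: v_def Si1eq d_def \<sigma>mult)
    finally show ?thesis .
  qed
  have cu: "continuous_on {0<..1} u"
  proof -
    have "continuous_on {0<..1} (\<lambda>\<tau>. \<pi> (1 - \<tau>))"
      by (rule continuous_on_compose2[OF h1]) (auto intro!: continuous_intros)
    then have "continuous_on {0<..1} (\<lambda>\<tau>. S i (\<pi> (1 - \<tau>)))"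
      by (rule continuous_on_compose2[OF A.S_cont[OF i1(1)]]) auto
    then show ?thesis unfolding u_def by (intro continuous_intros)
  qed
  have cv: "continuous_on {0<..1} v"
  proof -
    have "continuous_on {0<..1} \<pi>" by (rule continuous_on_subset[OF h1]) auto
    then have "continuous_on {0<..1} (\<lambda>x. S (Suc i) (\<pi> x))"
      by (rule continuous_on_compose2[OF A.S_cont[OF i1(2)]]) auto
    then show ?thesis unfolding v_def by (intro continuous_intros)
  qed
  have unz: "u \<tau> \<noteq> 0" if \<tau>: "\<tau> \<in> {0<..1}" for \<tau>
  proof
    assume "u \<tau> = 0"
    then have "S i (\<pi> (1 - \<tau>)) = S i 1" by (simp add: u_def p_def)
    then have "\<pi> (1 - \<tau>) = 1" by (rule A.S_inj[OF i1(1)])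
    moreover have "1 - \<tau> \<in> {0..<1}" using \<tau> by auto
    ultimately show False using ne1 by blast
  qed
  have vnz: "v x \<noteq> 0" if x: "x \<in> {0<..1}" for x
  proof
    assume "v x = 0"
    then have "S (Suc i) (\<pi> x) = S (Suc i) 0" by (simp add: v_def p2)
    then have "\<pi> x = 0" by (rule A.S_inj[OF i1(2)])
    then show False using ne0 x by blast
  qed
  have Ms: "1 \<le> real N ^ s" "1 < real N ^ s" using Npos s0 by (auto intro: one_less_power)
  have Mt: "1 \<le> real N ^ t" "1 < real N ^ t" using Npos t0 by (auto intro: one_less_power)
  obtain LU lU where LU: "continuous_on {0<..1} LU" "\<And>\<tau>. \<tau> \<in> {0<..1} \<Longrightarrow> u \<tau> = exp (LU \<tau>)"
      "\<And>\<tau>. \<tau> \<in> {0<..1} \<Longrightarrow> LU (\<tau> / real N ^ s) = LU \<tau> + lU" "exp lU = c"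
    apply (rule log_shift[OF cu unz Ms(1)])
      apply assumption
     apply (rule ush, assumption)
    apply (rule that)
       apply assumption+
    done
  obtain LV lV where LV: "continuous_on {0<..1} LV" "\<And>x. x \<in> {0<..1} \<Longrightarrow> v x = exp (LV x)"
      "\<And>x. x \<in> {0<..1} \<Longrightarrow> LV (x / real N ^ t) = LV x + lV" "exp lV = d"
    apply (rule log_shift[OF cv vnz Mt(1)])
      apply assumption
     apply (rule vsh, assumption)
    apply (rule that)
       apply assumption+
    done
  define R where "R = r 1 ^ t"
  have R: "0 < R" "R < 1" using r1 t0 by (auto simp: R_def power_less_one_iff)
  have nq1: "norm q1 = r 1" using r1 by (simp add: q1_def norm_mult)
  have nqN: "norm qN = r N" using rN by (simp add: qN_def norm_mult)
  have "norm c = r N ^ s" by (simp add: c_def \<sigma>norm norm_power nqN)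
  then have nc: "norm c = R" using ts by (simp add: R_def)
  have nd: "norm d = R" by (simp add: d_def \<sigma>norm norm_power nq1 R_def)
  have ReU: "Re lU = ln R"
  proof -
    have "exp (Re lU) = R" using LU(4) nc by (metis norm_exp_eq_Re)
    then show ?thesis by (metis ln_exp)
  qed
  have ReV: "Re lV = ln R"
  proof -
    have "exp (Re lV) = R" using LV(4) nd by (metis norm_exp_eq_Re)
    then show ?thesis by (metis ln_exp)
  qed
  define ell where "ell = ln R"
  have ell: "ell < 0" using R by (simp add: ell_def)
  have cd: "c \<noteq> d"
  proof
    assume "c = d"
    then have "qN ^ s = q1 ^ t" unfolding c_def d_def by (rule \<sigma>inj)
    moreover have "qN ^ s = complex_of_real (r N ^ s) * cis (real s * \<alpha> N)"
      by (simp add: qN_def power_mult_distrib Complex.DeMoivre)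
    moreover have "q1 ^ t = complex_of_real (r 1 ^ t) * cis (real t * \<alpha> 1)"
      by (simp add: q1_def power_mult_distrib Complex.DeMoivre)
    ultimately have "complex_of_real (r N ^ s) * cis (real s * \<alpha> N) = complex_of_real (r 1 ^ t) * cis (real t * \<alpha> 1)"
      by metis
    then have "complex_of_real R * cis (real s * \<alpha> N) = complex_of_real R * cis (real t * \<alpha> 1)"
      unfolding R_def ts[symmetric] .
    then have e: "cis (real s * \<alpha> N) = cis (real t * \<alpha> 1)" using R by simp
    have "cis (real t * \<alpha> 1 - real s * \<alpha> N) = cis (real t * \<alpha> 1) / cis (real s * \<alpha> N)"
      by (simp add: cis_divide)
    also have "\<dots> = 1" using e by simp
    finally obtain n :: int where "real t * \<alpha> 1 - real s * \<alpha> N = 2 * pi * n"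
      using cis_eq_1_int by blast
    then have "q = of_int n" using ang by simp
    then show False using qirr by simp
  qed
  have lUV: "Im lU \<noteq> Im lV"
  proof
    assume "Im lU = Im lV"
    then have "lU = lV" using ReU ReV by (simp add: complex_eq_iff)
    then show False using cd LU(4) LV(4) by simp
  qed
  define \<delta> where "\<delta> = Im lV - Im lU"
  have \<delta>: "\<delta> \<noteq> 0" using lUV by (simp add: \<delta>_def)
  define ei :: int where "ei = (if \<delta> > 0 then 1 else -1)"
  define e where "e = real_of_int ei"
  have e2: "e * e = 1" by (simp add: e_def ei_def)
  have ed: "e * \<delta> = \<bar>\<delta>\<bar>" by (simp add: e_def ei_def)
  define \<beta> where "\<beta> = \<bar>\<delta>\<bar> / (2 * pi)"
  have \<beta>: "0 < \<beta>" using \<delta> by (simp add: \<beta>_def)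
  define \<Phi> where "\<Phi> w = complex_of_real (Re w / ell) + \<i> * complex_of_real (e * (Im w - (Re w / ell) * Im lU) / (2 * pi))" for w
  have Re\<Phi>: "Re (\<Phi> w) = Re w / ell" for w by (simp add: \<Phi>_def)
  have Im\<Phi>: "Im (\<Phi> w) = e * (Im w - (Re w / ell) * Im lU) / (2 * pi)" for w by (simp add: \<Phi>_def)
  have \<Phi>add: "\<Phi> (a + c) = \<Phi> a + \<Phi> c" for a c
    by (rule complex_eqI) (simp_all add: Re\<Phi> Im\<Phi> add_divide_distrib diff_divide_distrib algebra_simps)
  have \<Phi>U: "\<Phi> lU = 1"
    using ell by (intro complex_eqI) (simp_all add: Re\<Phi> Im\<Phi> ReU ell_def)
  have \<Phi>V: "\<Phi> lV = Complex 1 \<beta>"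
  proof (rule complex_eqI)
    show "Re (\<Phi> lV) = Re (Complex 1 \<beta>)" using ell by (simp add: Re\<Phi> ReV ell_def)
    have "Im (\<Phi> lV) = e * \<delta> / (2 * pi)" using ell by (simp add: Im\<Phi> ReV ell_def \<delta>_def)
    then show "Im (\<Phi> lV) = Im (Complex 1 \<beta>)" using ed by (simp add: \<beta>_def)
  qed
  define P where "P \<tau> = \<Phi> (LU \<tau>)" for \<tau>
  define Q where "Q x = \<Phi> (LV x)" for x
  have cP: "continuous_on {0<..1} P" unfolding P_def \<Phi>_def using ell by (intro continuous_intros LU(1)) auto
  have cQ: "continuous_on {0<..1} Q" unfolding Q_def \<Phi>_def using ell by (intro continuous_intros LV(1)) auto
  have shP: "P (\<tau> / real N ^ s) = P \<tau> + 1" if "\<tau> \<in> {0<..1}" for \<tau>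
    using LU(3)[OF that] by (simp add: P_def \<Phi>add \<Phi>U)
  have shQ: "Q (x / real N ^ t) = Q x + Complex 1 \<beta>" if "x \<in> {0<..1}" for x
    using LV(3)[OF that] by (simp add: Q_def \<Phi>add \<Phi>V)
  obtain \<tau> x k where \<tau>: "\<tau> \<in> {0<..1}" and x: "x \<in> {0<..1}" and k: "P \<tau> + \<i> * of_int k = Q x"
    using crossing[OF cP cQ Ms(2) Mt(2) \<beta> shP shQ] by blast
  define w where "w = LV x - LU \<tau>"
  have "\<Phi> w + P \<tau> = Q x" using \<Phi>add[of w "LU \<tau>"] by (simp add: w_def P_def Q_def)
  then have \<Phi>w: "\<Phi> w = \<i> * of_int k" using k by (metis add.commute add_left_cancel)
  have Rew: "Re w = 0"
  proof -
    have "Re w / ell = 0" using \<Phi>w Re\<Phi>[of w] by simp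
    then show ?thesis using ell by simp
  qed
  have Imw: "Im w = of_int (2 * (k * ei)) * pi"
  proof -
    have "e * Im w / (2 * pi) = of_int k" using \<Phi>w Im\<Phi>[of w] Rew by simp
    then have "e * Im w = 2 * pi * of_int k" by (simp add: field_simps)
    then have E: "e * (e * Im w) = e * (2 * pi * of_int k)" by simp
    have "Im w = (e * e) * Im w" using e2 by simp
    also have "\<dots> = e * (e * Im w)" by (simp only: mult.assoc)
    also have "\<dots> = 2 * pi * of_int k * e" using E by (simp only: mult.commute)
    finally have "Im w = 2 * pi * of_int k * e" .
    then show ?thesis by (simp add: e_def)
  qed
  have "exp w = 1" unfolding exp_eq_1 using Rew Imw by blast
  then have "exp (LV x) = exp (LU \<tau>)" by (simp add: w_def exp_diff)
  then have uv: "u \<tau> = v x" using LU(2)[OF \<tau>] LV(2)[OF x] by simp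
  then have eqS: "S i (\<pi> (1 - \<tau>)) = S (Suc i) (\<pi> x)" by (simp add: u_def v_def)
  have g1: "\<pi> (1 - \<tau>) \<in> \<gamma>" and g2: "\<pi> x \<in> \<gamma>" using h5 \<tau> x by auto
  have "S i (\<pi> (1 - \<tau>)) \<in> S i ` \<gamma>" using g1 by (rule imageI)
  moreover have "S i (\<pi> (1 - \<tau>)) \<in> S (Suc i) ` \<gamma>" unfolding eqS using g2 by (rule imageI)
  ultimately have "S i (\<pi> (1 - \<tau>)) \<in> S i ` \<gamma> \<inter> S (Suc i) ` \<gamma>" by (rule IntI)
  then have "S i (\<pi> (1 - \<tau>)) = p" using A.arc1[OF i] p2 by simp
  then have "u \<tau> = 0" by (simp add: u_def)
  then show False using unz[OF \<tau>] by simp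
qed

theorem theorem1p7:
  fixes N :: nat and r \<alpha> :: "nat \<Rightarrow> real" and rf :: "nat \<Rightarrow> bool"
    and b :: "nat \<Rightarrow> complex" and \<gamma> :: "complex set"
  defines "S \<equiv> (\<lambda>j. simil (r j) (\<alpha> j) (rf j) (b j))"
  assumes data: "IFS_data N r \<alpha> rf b"
    and path: "normalized_IFS_path N S \<gamma>"
    and orient: "\<not> rf 1" "\<not> rf N"
    and angles: "\<exists>t s :: nat. r 1 ^ t = r N ^ s \<and>
                   (\<exists>q::real. q \<notin> \<rat> \<and> real t * \<alpha> 1 - real s * \<alpha> N = 2 * pi * q)"
    and junction: "\<exists>i\<in>{1..N-1}. rf i = rf (Suc i) \<and>
                   \<not> (\<exists>\<theta>. rot_around (S i 1) \<theta> ` (S i ` \<gamma>) \<subseteq> S (Suc i) ` \<gamma>) \<and>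
                   \<not> (\<exists>\<theta>. rot_around (S i 1) \<theta> ` (S (Suc i) ` \<gamma>) \<subseteq> S i ` \<gamma>)"
  shows "\<not> IFS_arc N S \<gamma>"
proof
  assume arc: "IFS_arc N S \<gamma>"
  have Sd: "S = (\<lambda>j. simil (r j) (\<alpha> j) (rf j) (b j))" by (simp add: S_def)
  have A: "ifs_arc N S r \<gamma>" by (rule setup_interp[OF Sd data arc])
  obtain t s :: nat and q :: real where ts: "r 1 ^ t = r N ^ s" and qirr: "q \<notin> \<rat>"
    and ang: "real t * \<alpha> 1 - real s * \<alpha> N = 2 * pi * q"
    using angles by blast
  obtain i where i: "i \<in> {1..N-1}" and rfi: "rf i = rf (Suc i)" using junction by blast
  show False by (rule main_contra[OF Sd A orient ts qirr ang i rfi])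
qed

end
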